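(* Let $M$ be a deterministic finite automaton that satisfies the partial order condition. Then the minimal deterministic finite automaton accepting $L(M)$ also satisfies the partial order condition.
   Context: A DFA $(Q,\Sigma,\delta,q_0,F)$ (with $\delta$ extended to strings) satisfies the partial order condition if there do not exist two distinguishable states $q_1,q_2\in Q$ and strings $x,y\in\Sigma^+$ with $\delta(q_1,x)=\delta(q_2,x)=q_2$ and $\delta(q_2,y)=q_1$; here $q_1,q_2$ are distinguishable if there is $z\in\Sigma^*$ such that exactly one of $\delta(q_1,z),\delta(q_2,z)$ lies in $F$. *)

theory Defs
  imports Main
begin

record ('q, 'a) dfa =
  states :: "'q set"
  alph   :: "'a set"
  trans  :: "'q \<Rightarrow> 'a \<Rightarrow> 'q"
  init   :: "'q"
  final  :: "'q set"

definition dfa :: "('q, 'a) dfa \<Rightarrow> bool" where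
  "dfa M \<longleftrightarrow> finite (states M) \<and> finite (alph M) \<and> init M \<in> states M
     \<and> final M \<subseteq> states M
     \<and> (\<forall>q\<in>states M. \<forall>a\<in>alph M. trans M q a \<in> states M)"

fun delta_star :: "('q, 'a) dfa \<Rightarrow> 'q \<Rightarrow> 'a list \<Rightarrow> 'q" where
  "delta_star M q [] = q"
| "delta_star M q (a # w) = delta_star M (trans M q a) w"

definition lang :: "('q, 'a) dfa \<Rightarrow> 'a list set" where
  "lang M = {w. set w \<subseteq> alph M \<and> delta_star M (init M) w \<in> final M}"

definition distinguishable :: "('q, 'a) dfa \<Rightarrow> 'q \<Rightarrow> 'q \<Rightarrow> bool" where
  "distinguishable M q1 q2 \<longleftrightarrow>
     (\<exists>z. set z \<subseteq> alph M \<and>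
          (delta_star M q1 z \<in> final M \<longleftrightarrow> delta_star M q2 z \<notin> final M))"

definition partial_order_condition :: "('q, 'a) dfa \<Rightarrow> bool" where
  "partial_order_condition M \<longleftrightarrow>
     \<not> (\<exists>q1\<in>states M. \<exists>q2\<in>states M. \<exists>x y.
          distinguishable M q1 q2 \<and>
          x \<noteq> [] \<and> set x \<subseteq> alph M \<and> y \<noteq> [] \<and> set y \<subseteq> alph M \<and>
          delta_star M q1 x = q2 \<and> delta_star M q2 x = q2 \<and> delta_star M q2 y = q1)"

text \<open>Competitors are taken with states in nat, which
  is no loss since every finite DFA is isomorphic to one with natural-number states.\<close>
definition minimal_dfa_for :: "('p, 'a) dfa \<Rightarrow> 'a set \<Rightarrow> 'a list set \<Rightarrow> bool" where
  "minimal_dfa_for N \<Sigma> L \<longleftrightarrow> dfa N \<and> alph N = \<Sigma> \<and> lang N = L \<and>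
     (\<forall>K :: (nat, 'a) dfa. dfa K \<and> alph K = \<Sigma> \<and> lang K = L \<longrightarrow> card (states N) \<le> card (states K))"

end

theory Submission
  imports Defs "HOL-Library.FuncSet"
begin

lemma delta_star_append:
  "delta_star M q (u @ v) = delta_star M (delta_star M q u) v"
  by (induction u arbitrary: q) auto

lemma delta_star_in:
  assumes "dfa M" "q \<in> states M" "set w \<subseteq> alph M"
  shows "delta_star M q w \<in> states M"
  using assms(2,3)
proof (induction w arbitrary: q)
  case Nil then show ?case by simp
next
  case (Cons a w)
  have "trans M q a \<in> states M" using assms(1) Cons.prems unfolding dfa_def by auto
  then show ?case using Cons by simp
qed

lemma delta_star_pow:
  "delta_star M q (concat (replicate m x)) = ((\<lambda>q. delta_star M q x)^^m) q"
  by (induction m arbitrary: q) (simp_all add: delta_star_append funpow_Suc_right del: funpow.simps)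

lemma funpow_in:
  assumes "\<forall>q\<in>S. f q \<in> S" "q \<in> S"
  shows "(f^^i) q \<in> S"
  using assms by (induction i) auto

lemma idem_pow:
  fixes f :: "'b \<Rightarrow> 'b"
  assumes fin: "finite S" and cl: "\<forall>q\<in>S. f q \<in> S"
  shows "\<exists>m>0. \<forall>q\<in>S. (f^^m) ((f^^m) q) = (f^^m) q"
proof -
  define F where "F = (\<lambda>i. restrict (f^^i) S)"
  have "range F \<subseteq> (S \<rightarrow>\<^sub>E S)"
    using funpow_in[OF cl] unfolding F_def by auto
  moreover have "finite (S \<rightarrow>\<^sub>E S)" using fin by (simp add: finite_PiE)
  ultimately have "finite (range F)" by (rule finite_subset)
  then have "\<not> inj F" using finite_imageD infinite_UNIV_nat by blast
  then obtain i j where ij: "i \<noteq> j" "F i = F j" unfolding inj_def by blast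
  obtain i j where ij: "i < j" "F i = F j"
    using ij by (metis linorder_neqE_nat)
  have eq: "(f^^i) q = (f^^j) q" if "q \<in> S" for q
    using ij(2) that unfolding F_def by (metis restrict_apply')
  define p where "p = j - i"
  have pp: "p > 0" using ij p_def by simp
  have step: "(f^^(a + p)) q = (f^^a) q" if "a \<ge> i" "q \<in> S" for a q
  proof -
    have "(f^^(a + p)) q = (f^^(a - i)) ((f^^j) q)"
      using that ij p_def by (metis add.commute funpow_add le_add_diff_inverse2 less_imp_le_nat o_apply add.assoc le_add_diff_inverse)
    also have "\<dots> = (f^^(a - i)) ((f^^i) q)" using eq that by simp
    also have "\<dots> = (f^^a) q" using that by (metis funpow_add le_add_diff_inverse2 o_apply)
    finally show ?thesis .
  qed
  have mult: "(f^^(a + t * p)) q = (f^^a) q" if "a \<ge> i" "q \<in> S" for a q t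
  proof (induction t)
    case 0 then show ?case by simp
  next
    case (Suc t)
    have "(f^^(a + Suc t * p)) q = (f^^((a + t * p) + p)) q" by (simp add: algebra_simps)
    also have "\<dots> = (f^^(a + t * p)) q" using step that by simp
    finally show ?case using Suc by simp
  qed
  define m where "m = Suc i * p"
  have "m > 0" using pp m_def by simp
  moreover have "\<forall>q\<in>S. (f^^m) ((f^^m) q) = (f^^m) q"
  proof
    fix q assume "q \<in> S"
    have "i \<le> i * p" using pp by simp
    moreover have "m = p + i * p" by (simp add: m_def)
    ultimately have "m \<ge> i" by linarith
    then have "(f^^(m + Suc i * p)) q = (f^^m) q" using mult \<open>q \<in> S\<close> by blast
    then show "(f^^m) ((f^^m) q) = (f^^m) q" by (simp add: m_def funpow_add)
  qed
  ultimately show ?thesis by blast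
qed


lemma reach:
  fixes N :: "('p, 'a) dfa"
  assumes mi: "minimal_dfa_for N S L" and pN: "p \<in> states N"
  shows "\<exists>w. set w \<subseteq> S \<and> delta_star N (init N) w = p"
proof (rule ccontr)
  assume nr: "\<not> (\<exists>w. set w \<subseteq> S \<and> delta_star N (init N) w = p)"
  have d: "dfa N" and al: "alph N = S" and la: "lang N = L"
    and mn: "\<forall>K :: (nat, 'a) dfa. dfa K \<and> alph K = S \<and> lang K = L \<longrightarrow> card (states N) \<le> card (states K)"
    using mi unfolding minimal_dfa_for_def by auto
  define R where "R = {delta_star N (init N) w | w. set w \<subseteq> S}"
  have RS: "R \<subseteq> states N" using delta_star_in[OF d] d al unfolding R_def dfa_def by auto
  have fin: "finite (states N)" using d unfolding dfa_def by auto
  have finS: "finite S" using d al unfolding dfa_def by auto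
  obtain f :: "'p \<Rightarrow> nat" and n where "f ` states N = {i. i<n}" and inj: "inj_on f (states N)"
    using finite_imp_inj_to_nat_seg[OF fin] by blast
  define g where "g = inv_into (states N) f"
  have gf: "g (f q) = q" if "q \<in> states N" for q
    using inj that unfolding g_def by simp
  have initR: "init N \<in> R" unfolding R_def by (auto intro: exI[of _ "[]"])
  have Rcl: "trans N q a \<in> R" if qa: "q \<in> R" "a \<in> S" for q a
  proof -
    obtain w where w: "set w \<subseteq> S" "q = delta_star N (init N) w" using qa unfolding R_def by auto
    have "trans N q a = delta_star N (init N) (w @ [a])" using w by (simp add: delta_star_append)
    then show ?thesis using w qa unfolding R_def by fastforce
  qed
  define K :: "(nat, 'a) dfa" where "K = \<lparr>states = f ` R, alph = S,
      trans = (\<lambda>i a. f (trans N (g i) a)), init = f (init N), final = f ` (final N \<inter> R)\<rparr>"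
  have key: "delta_star K (f q) w = f (delta_star N q w)" if "q \<in> R" "set w \<subseteq> S" for q w
    using that
  proof (induction w arbitrary: q)
    case Nil then show ?case by simp
  next
    case (Cons a w)
    have "trans K (f q) a = f (trans N q a)" using gf Cons.prems RS unfolding K_def by auto
    then show ?case using Cons Rcl by simp
  qed
  have finR: "finite R" using RS fin finite_subset by blast
  have dK: "dfa K" unfolding dfa_def K_def using finR finS initR Rcl gf RS by auto
  have lK: "lang K = L"
  proof -
    have "w \<in> lang K \<longleftrightarrow> w \<in> lang N" for w
    proof (cases "set w \<subseteq> S")
      case True
      have r: "delta_star N (init N) w \<in> R" using True unfolding R_def by auto
      have "delta_star K (init K) w = f (delta_star N (init N) w)"
        using key[OF initR True] unfolding K_def by simp
      moreover have "f (delta_star N (init N) w) \<in> f ` (final N \<inter> R) \<longleftrightarrow> delta_star N (init N) w \<in> final N"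
        using r RS inj by (auto dest: inj_onD)
      ultimately show ?thesis using True al unfolding lang_def K_def by simp
    next
      case False then show ?thesis using al unfolding lang_def K_def by simp
    qed
    then show ?thesis using la by auto
  qed
  have "card (states K) = card R" unfolding K_def using inj RS by (simp add: card_image inj_on_subset)
  also have "\<dots> < card (states N)"
  proof (rule psubset_card_mono[OF fin])
    have "p \<notin> R" using nr unfolding R_def by auto
    then show "R \<subset> states N" using RS pN by blast
  qed
  finally have "card (states K) < card (states N)" .
  moreover have "card (states N) \<le> card (states K)" using mn dK lK unfolding K_def by auto
  ultimately show False by simp
qed


lemma loop_pow:
  assumes "delta_star N p2 x = p2"
  shows "delta_star N p2 (concat (replicate m x)) = p2"
  using assms by (induction m) (auto simp: delta_star_append)

theorem lemma4p4:
  fixes M :: "('q, 'a) dfa" and N :: "('p, 'a) dfa"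
  assumes "dfa M"
    and "partial_order_condition M"
    and "minimal_dfa_for N (alph M) (lang M)"
  shows "partial_order_condition N"
proof -
  define S where "S = alph M"
  have dN: "dfa N" and al: "alph N = S" and la: "lang N = lang M"
    using assms(3) unfolding minimal_dfa_for_def S_def by auto
  have res: "delta_star N (delta_star N (init N) w) z \<in> final N \<longleftrightarrow>
             delta_star M (delta_star M (init M) w) z \<in> final M"
    if "set w \<subseteq> S" "set z \<subseteq> S" for w z
  proof -
    have "delta_star N (delta_star N (init N) w) z \<in> final N \<longleftrightarrow> w @ z \<in> lang N"
      using that al unfolding lang_def by (simp add: delta_star_append)
    also have "\<dots> \<longleftrightarrow> w @ z \<in> lang M" using la by simp
    also have "\<dots> \<longleftrightarrow> delta_star M (delta_star M (init M) w) z \<in> final M"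
      using that unfolding lang_def S_def by (simp add: delta_star_append)
    finally show ?thesis .
  qed
  have finM: "finite (states M)" and initM: "init M \<in> states M" using assms(1) unfolding dfa_def by auto
  show ?thesis
    unfolding partial_order_condition_def
  proof
    assume "\<exists>q1\<in>states N. \<exists>q2\<in>states N. \<exists>x y.
          distinguishable N q1 q2 \<and>
          x \<noteq> [] \<and> set x \<subseteq> alph N \<and> y \<noteq> [] \<and> set y \<subseteq> alph N \<and>
          delta_star N q1 x = q2 \<and> delta_star N q2 x = q2 \<and> delta_star N q2 y = q1"
    then obtain p1 p2 x y where p1: "p1 \<in> states N" and p2: "p2 \<in> states N"
      and dist: "distinguishable N p1 p2" and x: "x \<noteq> []" "set x \<subseteq> S"
      and y: "y \<noteq> []" "set y \<subseteq> S" and e1: "delta_star N p1 x = p2"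
      and e2: "delta_star N p2 x = p2" and e3: "delta_star N p2 y = p1"
      using al by blast
    obtain u where u: "set u \<subseteq> S" "delta_star N (init N) u = p1"
      using reach[OF assms(3) p1] S_def by blast
    define fx where "fx = (\<lambda>q. delta_star M q x)"
    have clx: "\<forall>q\<in>states M. fx q \<in> states M"
      using delta_star_in[OF assms(1)] x unfolding fx_def S_def by auto
    obtain m where m: "m > 0" "\<forall>q\<in>states M. (fx^^m) ((fx^^m) q) = (fx^^m) q"
      using idem_pow[OF finM clx] by blast
    define e where "e = concat (replicate m x)"
    have eS: "set e \<subseteq> S" using x unfolding e_def by auto
    have ene: "e \<noteq> []" using x m unfolding e_def by (cases m) auto
    have eM: "delta_star M q e = (fx^^m) q" for q unfolding e_def fx_def by (rule delta_star_pow)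
    have eidem: "delta_star M (delta_star M q e) e = delta_star M q e" if "q \<in> states M" for q
      using m that eM by simp
    have eN: "delta_star N p1 e = p2"
    proof -
      obtain m' where "m = Suc m'" using m by (cases m) auto
      then have "e = x @ concat (replicate m' x)" unfolding e_def by simp
      then show ?thesis using e1 loop_pow[OF e2] by (simp add: delta_star_append)
    qed
    have eyN: "delta_star N p1 (e @ y) = p1" using eN e3 by (simp add: delta_star_append)
    define T where "T = (\<lambda>q. delta_star M q (e @ y))"
    have clT: "\<forall>q\<in>states M. T q \<in> states M"
      using delta_star_in[OF assms(1)] eS y unfolding T_def S_def by auto
    obtain k where k: "k > 0" "\<forall>q\<in>states M. (T^^k) ((T^^k) q) = (T^^k) q"
      using idem_pow[OF finM clT] by blast
    define w where "w = concat (replicate k (e @ y))"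
    have wS: "set w \<subseteq> S" using eS y unfolding w_def by auto
    have wM: "delta_star M q w = (T^^k) q" for q unfolding w_def T_def by (rule delta_star_pow)
    have wN: "delta_star N p1 w = p1" unfolding w_def by (rule loop_pow[OF eyN])
    define q0 where "q0 = delta_star M (init M) u"
    have q0S: "q0 \<in> states M" using delta_star_in[OF assms(1) initM] u unfolding q0_def S_def by auto
    define q1 where "q1 = delta_star M q0 w"
    define q2 where "q2 = delta_star M q1 e"
    have q1S: "q1 \<in> states M" using delta_star_in[OF assms(1) q0S] wS unfolding q1_def S_def by auto
    have q2S: "q2 \<in> states M" using delta_star_in[OF assms(1) q1S] eS unfolding q2_def S_def by auto
    define y' where "y' = y @ concat (replicate (k - 1) (e @ y))"
    have y'S: "set y' \<subseteq> S" using eS y unfolding y'_def by auto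
    have y'ne: "y' \<noteq> []" using y unfolding y'_def by simp
    have "e @ y' = w" using k unfolding y'_def w_def by (cases k) auto
    then have "delta_star M q2 y' = delta_star M q1 w" unfolding q2_def by (metis delta_star_append)
    also have "\<dots> = q1" unfolding q1_def using wM k q0S by simp
    finally have c3: "delta_star M q2 y' = q1" .
    have c2: "delta_star M q2 e = q2" unfolding q2_def using eidem q1S by simp
    have N1: "delta_star N (init N) (u @ w) = p1" using u wN by (simp add: delta_star_append)
    have N2: "delta_star N (init N) ((u @ w) @ e) = p2" using N1 eN by (simp add: delta_star_append)
    have M1: "delta_star M (init M) (u @ w) = q1" unfolding q1_def q0_def by (simp add: delta_star_append)
    have M2: "delta_star M (init M) ((u @ w) @ e) = q2" using M1 unfolding q2_def by (simp add: delta_star_append)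
    obtain z where z: "set z \<subseteq> S" "delta_star N p1 z \<in> final N \<longleftrightarrow> delta_star N p2 z \<notin> final N"
      using dist al unfolding distinguishable_def by blast
    have uwS: "set (u @ w) \<subseteq> S" and uweS: "set ((u @ w) @ e) \<subseteq> S" using u wS eS by auto
    have "delta_star M q1 z \<in> final M \<longleftrightarrow> delta_star M q2 z \<notin> final M"
      using z res[OF uwS z(1)] res[OF uweS z(1)] N1 N2 M1 M2 by simp
    then have dM: "distinguishable M q1 q2" unfolding distinguishable_def using z S_def by blast
    have "\<exists>q1\<in>states M. \<exists>q2\<in>states M. \<exists>x y.
          distinguishable M q1 q2 \<and>
          x \<noteq> [] \<and> set x \<subseteq> alph M \<and> y \<noteq> [] \<and> set y \<subseteq> alph M \<and>
          delta_star M q1 x = q2 \<and> delta_star M q2 x = q2 \<and> delta_star M q2 y = q1"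
      using q1S q2S dM ene eS y'ne y'S c2 c3 unfolding S_def q2_def[symmetric]
      by (intro bexI[of _ q1] bexI[of _ q2] exI[of _ e] exI[of _ y']) (auto simp: q2_def)
    then show False using assms(2) unfolding partial_order_condition_def by blast
  qed
qed

end
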